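(* Let $n\ge3$ and let $\mathcal F$ be a non-empty simplicial complex on the vertex set $[n]=\{1,\dots,n\}$ of dimension $n-3$, each of whose facets is of the form $[n]\setminus\{i,i+1\}$ for some $i$. Assume moreover that whenever $[n]\setminus\{i,i+1\}$ is a facet of $\mathcal F$, neither $[n]\setminus\{i+1,i+2\}$ nor $[n]\setminus\{i+2,i+3\}$ is a facet of $\mathcal F$. Then $\mathcal F$ has trivial (reduced) homology groups. *)

theory Defs
  imports "HOL-Homology.Homology"
begin

definition simplicial_complex_on :: "nat set \<Rightarrow> nat set set \<Rightarrow> bool" where
  "simplicial_complex_on V F \<longleftrightarrow>
     (\<forall>\<sigma>\<in>F. \<sigma> \<subseteq> V) \<and> (\<forall>\<sigma>\<in>F. \<forall>\<tau>. \<tau> \<subseteq> \<sigma> \<longrightarrow> \<tau> \<in> F)"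

definition facet :: "nat set set \<Rightarrow> nat set \<Rightarrow> bool" where
  "facet F \<sigma> \<longleftrightarrow> \<sigma> \<in> F \<and> (\<forall>\<tau>\<in>F. \<sigma> \<subseteq> \<tau> \<longrightarrow> \<tau> = \<sigma>)"

text \<open>Cyclic index reduction into {1..n}: k is read modulo n.\<close>
definition cyc :: "nat \<Rightarrow> nat \<Rightarrow> nat" where
  "cyc n k = (k + n - 1) mod n + 1"

definition gap :: "nat \<Rightarrow> nat \<Rightarrow> nat set" where
  "gap n i = {1..n} - {cyc n i, cyc n (i + 1)}"

text \<open>Geometric realization of a finite abstract simplicial complex with vertices in nat,
  as a subset of nat \<Rightarrow> real (barycentric coordinates), with the product topology.\<close>
definition geom_realization :: "nat set set \<Rightarrow> (nat \<Rightarrow> real) set" where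
  "geom_realization F = (\<Union>\<sigma>\<in>F - {{}}.
      {x. (\<forall>i. 0 \<le> x i) \<and> (\<forall>i. i \<notin> \<sigma> \<longrightarrow> x i = 0) \<and> sum x \<sigma> = 1})"

definition realization_top :: "nat set set \<Rightarrow> (nat \<Rightarrow> real) topology" where
  "realization_top F = subtopology (powertop_real UNIV) (geom_realization F)"

end

theory Submission
  imports Defs "HOL-Number_Theory.Cong"
begin

lemma cone_contractible:
  assumes fin: "\<forall>\<sigma>\<in>F. finite \<sigma>" and cone: "\<forall>\<sigma>\<in>F. insert v \<sigma> \<in> F"
  shows "contractible_space (realization_top F)"
proof -
  define e :: "nat \<Rightarrow> real" where "e = (\<lambda>k. if k = v then 1 else 0)"
  define h :: "real \<times> (nat \<Rightarrow> real) \<Rightarrow> (nat \<Rightarrow> real)"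
    where "h = (\<lambda>(t,x) k. (1 - t) * x k + t * e k)"
  have img: "h (t, x) \<in> geom_realization F" if t: "t \<in> {0..1}" and x: "x \<in> geom_realization F" for t x
  proof -
    from x obtain \<sigma> where s: "\<sigma> \<in> F" "\<sigma> \<noteq> {}" and x0: "\<forall>i. 0 \<le> x i"
      and xz: "\<forall>i. i \<notin> \<sigma> \<longrightarrow> x i = 0" and xs: "sum x \<sigma> = 1"
      unfolding geom_realization_def by blast
    let ?\<tau> = "insert v \<sigma>"
    have \<tau>: "?\<tau> \<in> F" "?\<tau> \<noteq> {}" "finite ?\<tau>" using cone fin s by auto
    have sx: "sum x ?\<tau> = 1"
      using xs xz fin s by (cases "v \<in> \<sigma>") (auto simp: sum.insert insert_absorb)
    have se: "sum e ?\<tau> = 1"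
      using \<tau>(3) by (simp add: e_def sum.delta)
    have "sum (h (t,x)) ?\<tau> = (1 - t) * sum x ?\<tau> + t * sum e ?\<tau>"
      by (simp add: h_def sum.distrib sum_distrib_left)
    also have "\<dots> = 1" using sx se by simp
    finally have "sum (h (t,x)) ?\<tau> = 1" .
    moreover have "\<forall>i. 0 \<le> h (t,x) i" using t x0 by (auto simp: h_def e_def)
    moreover have "\<forall>i. i \<notin> ?\<tau> \<longrightarrow> h (t,x) i = 0" using xz by (auto simp: h_def e_def)
    ultimately show ?thesis using \<tau> unfolding geom_realization_def by blast
  qed
  have cont: "continuous_map (prod_topology (top_of_set {0..1}) (realization_top F)) (realization_top F) h"
    unfolding realization_top_def
  proof (rule continuous_map_into_subtopology)
    show "continuous_map (prod_topology (top_of_set {0..1}) (subtopology (powertop_real UNIV) (geom_realization F)))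
       (powertop_real UNIV) h"
      unfolding continuous_map_componentwise_UNIV
    proof
      fix k
      have c1: "continuous_map (prod_topology (top_of_set {0..1}) (subtopology (powertop_real UNIV) (geom_realization F))) euclideanreal fst"
        using continuous_map_fst continuous_map_in_subtopology by metis
      have c2: "continuous_map (prod_topology (top_of_set {0..1}) (subtopology (powertop_real UNIV) (geom_realization F))) euclideanreal (\<lambda>p. snd p k)"
        by (intro continuous_map_compose[OF continuous_map_snd, unfolded o_def] continuous_map_from_subtopology continuous_map_product_projection) simp
      show "continuous_map (prod_topology (top_of_set {0..1}) (subtopology (powertop_real UNIV) (geom_realization F))) euclideanreal (\<lambda>x. h x k)"
        unfolding h_def case_prod_unfold
        by (intro continuous_map_add continuous_map_real_mult continuous_map_diff c1 c2) auto
    qed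
    show "h \<in> topspace (prod_topology (top_of_set {0..1}) (subtopology (powertop_real UNIV) (geom_realization F))) \<rightarrow> geom_realization F"
      using img by fastforce
  qed
  have "homotopic_with (\<lambda>x. True) (realization_top F) (realization_top F) id (\<lambda>x. e)"
    unfolding homotopic_with_def
    by (rule exI[of _ h]) (use cont in \<open>auto simp: h_def\<close>)
  then show ?thesis unfolding contractible_space_def by blast
qed

lemma cyc_eq_iff: "0 < n \<Longrightarrow> cyc n a = cyc n b \<longleftrightarrow> a mod n = b mod n"
proof -
  assume n: "0 < n"
  have "(a + n - 1) mod n = (b + n - 1) mod n \<longleftrightarrow> (a + (n - 1)) mod n = (b + (n - 1)) mod n"
    using n by simp
  also have "\<dots> \<longleftrightarrow> a mod n = b mod n"
    using cong_add_rcancel_nat[of a "n - 1" b n] by (simp add: cong_def)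
  finally show ?thesis by (simp add: cyc_def)
qed

lemma gap_cong: "0 < n \<Longrightarrow> a mod n = b mod n \<Longrightarrow> gap n a = gap n b"
  unfolding gap_def using cyc_eq_iff[of n a b] cyc_eq_iff[of n "a+1" "b+1"]
  by (metis mod_Suc_eq Suc_eq_plus1)

lemma cyc_range: "0 < n \<Longrightarrow> cyc n k \<in> {1..n}"
  unfolding cyc_def by (simp add: Suc_leI)

theorem lemma3p7:
  fixes n :: nat and F :: "nat set set"
  assumes "n \<ge> 3"
    and "simplicial_complex_on {1..n} F"
    and "\<exists>\<sigma>\<in>F. \<sigma> \<noteq> {}"
    and "(\<exists>\<sigma>\<in>F. card \<sigma> = n - 2) \<and> (\<forall>\<sigma>\<in>F. card \<sigma> \<le> n - 2)"
    and "\<forall>\<sigma>. facet F \<sigma> \<longrightarrow> (\<exists>i\<in>{1..n}. \<sigma> = gap n i)"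
    and "\<forall>i\<in>{1..n}. facet F (gap n i) \<longrightarrow>
           \<not> facet F (gap n (i + 1)) \<and> \<not> facet F (gap n (i + 2))"
  shows "\<forall>p::int. trivial_group (reduced_homology_group p (realization_top F))"
proof -
  have n: "0 < n" using assms(1) by simp
  have sub: "\<forall>\<sigma>\<in>F. \<sigma> \<subseteq> {1..n}" and down: "\<forall>\<sigma>\<in>F. \<forall>\<tau>. \<tau> \<subseteq> \<sigma> \<longrightarrow> \<tau> \<in> F"
    using assms(2) unfolding simplicial_complex_on_def by auto
  have fin: "\<forall>\<sigma>\<in>F. finite \<sigma>" using sub finite_subset by blast
  have finF: "finite F" using sub by (meson Pow_iff finite_Pow_iff finite_atLeastAtMost finite_subset subsetI)
  have ext: "\<exists>\<tau>. facet F \<tau> \<and> \<sigma> \<subseteq> \<tau>" if sF: "\<sigma> \<in> F" for \<sigma>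
  proof -
    obtain m where "m \<in> F" "\<sigma> \<subseteq> m" "\<forall>b\<in>F. m \<subseteq> b \<longrightarrow> m = b"
      using finite_has_maximal2[OF finF sF] by blast
    then show ?thesis unfolding facet_def by blast
  qed
  obtain \<sigma>0 where "\<sigma>0 \<in> F" using assms(3) by blast
  then obtain \<tau>0 where "facet F \<tau>0" using ext by blast
  then obtain i0 where i0: "i0 \<in> {1..n}" "facet F (gap n i0)" using assms(5) by blast
  have nf1: "\<not> facet F (gap n (i0 + 1))" and nf2: "\<not> facet F (gap n (i0 + 2))"
    using assms(6) i0 by auto
  define v where "v = cyc n (i0 + 2)"
  have vin: "v \<in> gap n j" if "facet F (gap n j)" for j
  proof -
    have "v \<noteq> cyc n j"
    proof
      assume "v = cyc n j"
      then have "j mod n = (i0 + 2) mod n" using cyc_eq_iff[OF n] v_def by metis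
      then have "gap n j = gap n (i0 + 2)" using gap_cong[OF n] by blast
      then show False using that nf2 by simp
    qed
    moreover have "v \<noteq> cyc n (j + 1)"
    proof
      assume "v = cyc n (j + 1)"
      then have "(j + 1) mod n = (i0 + 1 + 1) mod n" using cyc_eq_iff[OF n] v_def
        by (metis add_2_eq_Suc' add_Suc_right Suc_eq_plus1)
      then have "j mod n = (i0 + 1) mod n" using cong_add_rcancel_nat[of j 1 "i0+1" n] by (simp add: cong_def)
      then have "gap n j = gap n (i0 + 1)" using gap_cong[OF n] by blast
      then show False using that nf1 by simp
    qed
    ultimately show ?thesis using cyc_range[OF n] v_def unfolding gap_def by auto
  qed
  have cone: "\<forall>\<sigma>\<in>F. insert v \<sigma> \<in> F"
  proof
    fix \<sigma> assume "\<sigma> \<in> F"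
    then obtain \<tau> where t: "facet F \<tau>" "\<sigma> \<subseteq> \<tau>" using ext by blast
    then obtain j where "\<tau> = gap n j" using assms(5) by blast
    then have "v \<in> \<tau>" using vin t by blast
    then have "insert v \<sigma> \<subseteq> \<tau>" using t by blast
    then show "insert v \<sigma> \<in> F" using down t unfolding facet_def by blast
  qed
  show ?thesis
    using cone_contractible[OF fin cone] trivial_reduced_homology_group_contractible_space by blast
qed

end
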